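(* Let $N, M \ge 1$ be integers, let $\beta>0$, and let $\mathbf{X}_1,\dots,\mathbf{X}_M$ be real matrices with $\mathbf{X}_m\in\mathbb{R}^{N\times K_m}$. Define the sets of valid graph Laplacians $$\mathcal{L}^{(s)}=\{\mathbf{L}\in\mathbb{R}^{N\times N}:\ \mathbf{L}\succeq 0,\ \mathrm{tr}(\mathbf{L})=N,\ L_{ij}=L_{ji}\le 0\ (i\ne j),\ \mathbf{L}\mathbf{1}=\mathbf{0}\},$$ $$\mathcal{L}^{(t)}=\{\mathbf{L}\in\mathbb{R}^{M\times M}:\ \mathbf{L}\succeq 0,\ \mathrm{tr}(\mathbf{L})=M,\ L_{ij}=L_{ji}\le 0\ (i\ne j),\ \mathbf{L}\mathbf{1}=\mathbf{0}\}.$$ For spatial Laplacians $\mathbf{L}^{(s)}_1,\dots,\mathbf{L}^{(s)}_M\in\mathcal{L}^{(s)}$ and a temporal Laplacian $\mathbf{L}^{(t)}\in\mathcal{L}^{(t)}$, let $\tilde{\mathbf{X}}\in\mathbb{R}^{M\times N^2}$ be the matrix whose $m$-th row is $\mathrm{vec}(\mathbf{L}^{(s)}_m)^\top$, and consider the objective $$F\big(\{\mathbf{L}^{(s)}_m\}_{m=1}^M,\mathbf{L}^{(t)}\big)=\sum_{m=1}^{M}\mathrm{tr}\big(\mathbf{X}_m^\top \mathbf{L}^{(s)}_m \mathbf{X}_m\big)+\beta\sum_{m=1}^{M}\|\mathbf{L}^{(s)}_m\|_F^2+\mathrm{tr}\big(\tilde{\mathbf{X}}^\top \mathbf{L}^{(t)}\tilde{\mathbf{X}}\big)+\beta\|\mathbf{L}^{(t)}\|_F^2,$$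 to be minimized subject to $\mathbf{L}^{(s)}_m\in\mathcal{L}^{(s)}$ for all $m$ and $\mathbf{L}^{(t)}\in\mathcal{L}^{(t)}$. Writing $w^{(t)}_{ij}=-L^{(t)}_{ij}$ ($i\ne j$) for the temporal edge weights, one has $\mathrm{tr}(\tilde{\mathbf{X}}^\top \mathbf{L}^{(t)}\tilde{\mathbf{X}})=\sum_{i<j} w^{(t)}_{ij}\|\mathbf{L}^{(s)}_i-\mathbf{L}^{(s)}_j\|_F^2$. Consider the following block coordinate descent algorithm (SpaTeoGL): initialize $\{\mathbf{L}^{(s)}_m\}\subset\mathcal{L}^{(s)}$ and $\mathbf{L}^{(t)}\in\mathcal{L}^{(t)}$; then repeat: for $m=1,\dots,M$ in turn, replace $\mathbf{L}^{(s)}_m$ by a solution of $$\min_{\mathbf{L}^{(s)}_m\in\mathcal{L}^{(s)}}\ \mathrm{tr}\big(\mathbf{X}_m^\top \mathbf{L}^{(s)}_m \mathbf{X}_m\big)+\beta\|\mathbf{L}^{(s)}_m\|_F^2+\sum_{j\ne m} w^{(t)}_{mj}\|\mathbf{L}^{(s)}_m-\mathbf{L}^{(s)}_j\|_F^2$$ (with all other blocks held at their current values); then form $\tilde{\mathbf{X}}$ from the current spatial Laplacians and replace $\mathbf{L}^{(t)}$ by a solution of $$\min_{\mathbf{L}^{(t)}\in\mathcal{L}^{(t)}}\ \mathrm{tr}\big(\tilde{\mathbf{X}}^\top \mathbf{L}^{(t)}\tilde{\mathbf{X}}\big)+\beta\|\mathbf{L}^{(t)}\|_F^2.$$ Assume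 $\beta>0$ and that each of these block subproblems is solved exactly over the nonempty closed convex sets $\mathcal{L}^{(s)}$ and $\mathcal{L}^{(t)}$. Then the objective $F$ is non-increasing across the iterations of the algorithm; moreover, every limit point of the iterates is a stationary point of the constrained minimization of $F$; and each block update admits a unique minimizer.
   Context: $\mathbf{X}\succeq 0$ means $\mathbf{X}$ is positive semidefinite; $\|\cdot\|_F$ is the Frobenius norm; $\mathrm{vec}(\cdot)$ is column-wise vectorization; $\mathbf{1}$ is the all-ones vector. The matrices $\mathbf{X}_m$ are windows of a multichannel signal (rows indexed by $N$ electrodes); $\mathbf{L}^{(s)}_m$ is the Laplacian of a spatial graph on the $N$ electrodes for window $m$, and $\mathbf{L}^{(t)}$ is the Laplacian of a temporal graph on the $M$ windows. An "iteration" is one full pass consisting of the $M$ spatial updates followed by the temporal update. *)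

theory Defs
  imports Complex_Main
begin

text \<open>Matrices are represented explicitly as functions nat => nat => real; an
  n x n matrix is one whose entries outside the index range {0..<n} x {0..<n} vanish.\<close>

type_synonym mat = "nat \<Rightarrow> nat \<Rightarrow> real"

definition supported :: "nat \<Rightarrow> mat \<Rightarrow> bool" where
  "supported n A \<longleftrightarrow> (\<forall>i j. (n \<le> i \<or> n \<le> j) \<longrightarrow> A i j = 0)"

definition psd :: "nat \<Rightarrow> mat \<Rightarrow> bool" where
  "psd n A \<longleftrightarrow> (\<forall>x :: nat \<Rightarrow> real. 0 \<le> (\<Sum>i<n. \<Sum>j<n. x i * A i j * x j))"

definition mtrace :: "nat \<Rightarrow> mat \<Rightarrow> real" where
  "mtrace n A = (\<Sum>i<n. A i i)"

definition mmult :: "nat \<Rightarrow> mat \<Rightarrow> mat \<Rightarrow> mat" where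
  "mmult n A B = (\<lambda>i k. \<Sum>j<n. A i j * B j k)"

definition transp :: "mat \<Rightarrow> mat" where
  "transp A = (\<lambda>i j. A j i)"

definition frob_sq :: "nat \<Rightarrow> mat \<Rightarrow> real" where
  "frob_sq n A = (\<Sum>i<n. \<Sum>j<n. (A i j)\<^sup>2)"

definition lap_set :: "nat \<Rightarrow> mat set" where
  "lap_set n = {L. supported n L \<and> psd n L \<and> mtrace n L = real n \<and>
      (\<forall>i<n. \<forall>j<n. i \<noteq> j \<longrightarrow> L i j = L j i \<and> L i j \<le> 0) \<and>
      (\<forall>i<n. (\<Sum>j<n. L i j) = 0)}"

definition vec :: "nat \<Rightarrow> mat \<Rightarrow> nat \<Rightarrow> real" where
  "vec N A = (\<lambda>p. A (p mod N) (p div N))"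

definition Xtilde :: "nat \<Rightarrow> (nat \<Rightarrow> mat) \<Rightarrow> mat" where
  "Xtilde N Ls = (\<lambda>m p. vec N (Ls m) p)"

definition temporal_smooth :: "nat \<Rightarrow> nat \<Rightarrow> (nat \<Rightarrow> mat) \<Rightarrow> mat \<Rightarrow> real" where
  "temporal_smooth N M Ls Lt =
     mtrace (N * N) (mmult M (transp (Xtilde N Ls)) (mmult M Lt (Xtilde N Ls)))"

definition spatial_smooth :: "nat \<Rightarrow> nat \<Rightarrow> mat \<Rightarrow> mat \<Rightarrow> real" where
  "spatial_smooth N Km Xm L = mtrace Km (mmult N (transp Xm) (mmult N L Xm))"

definition objective ::
  "nat \<Rightarrow> nat \<Rightarrow> (nat \<Rightarrow> nat) \<Rightarrow> (nat \<Rightarrow> mat) \<Rightarrow> real \<Rightarrow> (nat \<Rightarrow> mat) \<Rightarrow> mat \<Rightarrow> real" where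
  "objective N M K X \<beta> Ls Lt =
     (\<Sum>m<M. spatial_smooth N (K m) (X m) (Ls m)) + \<beta> * (\<Sum>m<M. frob_sq N (Ls m))
     + temporal_smooth N M Ls Lt + \<beta> * frob_sq M Lt"

definition feasible :: "nat \<Rightarrow> nat \<Rightarrow> (nat \<Rightarrow> mat) \<Rightarrow> mat \<Rightarrow> bool" where
  "feasible N M Ls Lt \<longleftrightarrow> (\<forall>m<M. Ls m \<in> lap_set N) \<and> Lt \<in> lap_set M"

definition tweight :: "mat \<Rightarrow> nat \<Rightarrow> nat \<Rightarrow> real" where
  "tweight Lt i j = - Lt i j"

definition spatial_subobj ::
  "nat \<Rightarrow> nat \<Rightarrow> (nat \<Rightarrow> nat) \<Rightarrow> (nat \<Rightarrow> mat) \<Rightarrow> real \<Rightarrow> (nat \<Rightarrow> mat) \<Rightarrow> mat \<Rightarrow> nat \<Rightarrow> mat \<Rightarrow> real" where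
  "spatial_subobj N M K X \<beta> Ls Lt m L =
     spatial_smooth N (K m) (X m) L + \<beta> * frob_sq N L
     + (\<Sum>j\<in>{..<M} - {m}. tweight Lt m j * frob_sq N (\<lambda>a b. L a b - Ls j a b))"

definition temporal_subobj :: "nat \<Rightarrow> nat \<Rightarrow> real \<Rightarrow> (nat \<Rightarrow> mat) \<Rightarrow> mat \<Rightarrow> real" where
  "temporal_subobj N M \<beta> Ls L = temporal_smooth N M Ls L + \<beta> * frob_sq M L"

definition is_argmin :: "'a set \<Rightarrow> ('a \<Rightarrow> real) \<Rightarrow> 'a \<Rightarrow> bool" where
  "is_argmin S f x \<longleftrightarrow> x \<in> S \<and> (\<forall>y\<in>S. f x \<le> f y)"

text \<open>S k, T k: iterates after k full iterations (S k m = spatial Laplacian of window m).\<close>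
definition spateogl_run ::
  "nat \<Rightarrow> nat \<Rightarrow> (nat \<Rightarrow> nat) \<Rightarrow> (nat \<Rightarrow> mat) \<Rightarrow> real \<Rightarrow> (nat \<Rightarrow> nat \<Rightarrow> mat) \<Rightarrow> (nat \<Rightarrow> mat) \<Rightarrow> bool" where
  "spateogl_run N M K X \<beta> S T \<longleftrightarrow>
     feasible N M (S 0) (T 0) \<and>
     (\<forall>k. (\<forall>m<M. is_argmin (lap_set N)
              (spatial_subobj N M K X \<beta> (\<lambda>j. if j < m then S (Suc k) j else S k j) (T k) m)
              (S (Suc k) m))
         \<and> is_argmin (lap_set M) (temporal_subobj N M \<beta> (S (Suc k))) (T (Suc k)))"

text \<open>Limit point of the iterates (entrywise convergence along a subsequence);
  the limit is taken with zero entries outside the index ranges.\<close>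
definition is_limit_point ::
  "nat \<Rightarrow> nat \<Rightarrow> (nat \<Rightarrow> nat \<Rightarrow> mat) \<Rightarrow> (nat \<Rightarrow> mat) \<Rightarrow> (nat \<Rightarrow> mat) \<Rightarrow> mat \<Rightarrow> bool" where
  "is_limit_point N M S T Ls Lt \<longleftrightarrow>
     (\<forall>m<M. supported N (Ls m)) \<and> supported M Lt \<and>
     (\<exists>r. strict_mono r \<and>
        (\<forall>m<M. \<forall>i<N. \<forall>j<N. (\<lambda>k. S (r k) m i j) \<longlonglongrightarrow> Ls m i j) \<and>
        (\<forall>i<M. \<forall>j<M. (\<lambda>k. T (r k) i j) \<longlonglongrightarrow> Lt i j))"

text \<open>Stationary point of the constrained problem: feasible, and the directional derivative
  of the (smooth) objective towards every feasible point is nonnegative,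
  i.e. the first-order condition <grad F(z*), z - z*> >= 0 for all feasible z.\<close>
definition stationary ::
  "nat \<Rightarrow> nat \<Rightarrow> (nat \<Rightarrow> nat) \<Rightarrow> (nat \<Rightarrow> mat) \<Rightarrow> real \<Rightarrow> (nat \<Rightarrow> mat) \<Rightarrow> mat \<Rightarrow> bool" where
  "stationary N M K X \<beta> Ls Lt \<longleftrightarrow>
     feasible N M Ls Lt \<and>
     (\<forall>Ls' Lt'. feasible N M Ls' Lt' \<longrightarrow>
        (\<exists>D. ((\<lambda>t. objective N M K X \<beta>
                   (\<lambda>m i j. Ls m i j + t * (Ls' m i j - Ls m i j))
                   (\<lambda>i j. Lt i j + t * (Lt' i j - Lt i j))) has_real_derivative D) (at 0)
             \<and> 0 \<le> D))"

end

theory Submission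
  imports Defs
begin

definition ip :: "nat \<Rightarrow> mat \<Rightarrow> mat \<Rightarrow> real" where
  "ip n A B = (\<Sum>i<n. \<Sum>j<n. A i j * B i j)"

definition Cm :: "nat \<Rightarrow> mat \<Rightarrow> mat" where
  "Cm K X = (\<lambda>a b. \<Sum>k<K. X a k * X b k)"

lemma sum_rot3:
  "(\<Sum>x\<in>A. \<Sum>y\<in>B. \<Sum>z\<in>C. f x y z) = (\<Sum>y\<in>B. \<Sum>z\<in>C. \<Sum>x\<in>A. (f x y z::real))"
proof -
  have "(\<Sum>x\<in>A. \<Sum>y\<in>B. \<Sum>z\<in>C. f x y z) = (\<Sum>y\<in>B. \<Sum>x\<in>A. \<Sum>z\<in>C. f x y z)"
    by (rule sum.swap)
  also have "\<dots> = (\<Sum>y\<in>B. \<Sum>z\<in>C. \<Sum>x\<in>A. f x y z)"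
    by (rule sum.cong[OF refl], rule sum.swap)
  finally show ?thesis .
qed

lemma sum_rot4:
  "(\<Sum>x\<in>A. \<Sum>y\<in>B. \<Sum>z\<in>C. \<Sum>w\<in>D. f x y z w) = (\<Sum>y\<in>B. \<Sum>z\<in>C. \<Sum>w\<in>D. \<Sum>x\<in>A. (f x y z w::real))"
proof -
  have "(\<Sum>x\<in>A. \<Sum>y\<in>B. \<Sum>z\<in>C. \<Sum>w\<in>D. f x y z w) = (\<Sum>y\<in>B. \<Sum>z\<in>C. \<Sum>x\<in>A. \<Sum>w\<in>D. f x y z w)"
    by (rule sum_rot3)
  also have "\<dots> = (\<Sum>y\<in>B. \<Sum>z\<in>C. \<Sum>w\<in>D. \<Sum>x\<in>A. f x y z w)"
    by (rule sum.cong[OF refl], rule sum.cong[OF refl], rule sum.swap)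
  finally show ?thesis .
qed

lemma spatial_ip: "spatial_smooth N K X L = ip N L (Cm K X)"
proof -
  have "spatial_smooth N K X L = (\<Sum>k<K. \<Sum>a<N. \<Sum>b<N. L a b * (X a k * X b k))"
    unfolding spatial_smooth_def mtrace_def mmult_def transp_def
    by (simp add: sum_distrib_left mult_ac)
  also have "\<dots> = (\<Sum>a<N. \<Sum>b<N. \<Sum>k<K. L a b * (X a k * X b k))"
    by (rule sum_rot3)
  also have "\<dots> = ip N L (Cm K X)"
    unfolding ip_def Cm_def by (simp add: sum_distrib_left)
  finally show ?thesis .
qed

lemma sum_lessThan_mult:
  "(\<Sum>p<m*N. f p) = (\<Sum>b<m. \<Sum>a<N. f (b*N + a)::real)" for m N :: nat
proof (induction m)
  case 0 then show ?case by simp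
next
  case (Suc m)
  have "{..<Suc m * N} = {..<m*N} \<union> {m*N..<m*N+N}" by auto
  then have "(\<Sum>p<Suc m*N. f p) = (\<Sum>p<m*N. f p) + (\<Sum>p\<in>{m*N..<m*N+N}. f p)"
    by (simp add: sum.union_disjoint ivl_disj_int)
  also have "(\<Sum>p\<in>{m*N..<m*N+N}. f p) = (\<Sum>a<N. f (m*N + a))"
    using sum.shift_bounds_nat_ivl[of f 0 "m*N" N]
    by (simp add: add.commute lessThan_atLeast0)
  finally show ?case using Suc by simp
qed

lemma temporal_ip: "temporal_smooth N M Ls Lt = (\<Sum>i<M. \<Sum>j<M. Lt i j * ip N (Ls i) (Ls j))"
proof -
  have "temporal_smooth N M Ls Lt = (\<Sum>p<N*N. \<Sum>i<M. \<Sum>j<M. Lt i j * (Ls i (p mod N) (p div N) * Ls j (p mod N) (p div N)))"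
    unfolding temporal_smooth_def mtrace_def mmult_def transp_def Xtilde_def vec_def
    by (simp add: sum_distrib_left sum_distrib_right mult_ac)
  also have "\<dots> = (\<Sum>b<N. \<Sum>a<N. \<Sum>i<M. \<Sum>j<M. Lt i j * (Ls i a b * Ls j a b))"
    by (subst sum_lessThan_mult) (simp add: mult.commute)
  also have "\<dots> = (\<Sum>a<N. \<Sum>i<M. \<Sum>j<M. \<Sum>b<N. Lt i j * (Ls i a b * Ls j a b))"
    by (rule sum_rot4)
  also have "\<dots> = (\<Sum>i<M. \<Sum>j<M. \<Sum>a<N. \<Sum>b<N. Lt i j * (Ls i a b * Ls j a b))"
    by (rule sum_rot3)
  also have "\<dots> = (\<Sum>i<M. \<Sum>j<M. Lt i j * ip N (Ls i) (Ls j))"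
    unfolding ip_def by (simp add: sum_distrib_left)
  finally show ?thesis .
qed


lemma frob_ip: "frob_sq n A = ip n A A"
  unfolding frob_sq_def ip_def by (simp add: power2_eq_square)

lemma frob_diff: "frob_sq n (\<lambda>a b. X a b - Y a b) = ip n X X - 2 * ip n X Y + ip n Y Y"
proof -
  have "frob_sq n (\<lambda>a b. X a b - Y a b) = (\<Sum>i<n. \<Sum>j<n. X i j * X i j - 2 * (X i j * Y i j) + Y i j * Y i j)"
    unfolding frob_sq_def by (intro sum.cong refl) (simp add: power2_eq_square algebra_simps)
  also have "\<dots> = ip n X X - 2 * ip n X Y + ip n Y Y"
    unfolding ip_def by (simp add: sum.distrib sum_subtractf sum_distrib_left)
  finally show ?thesis .
qed

lemma frob_nonneg: "0 \<le> frob_sq n A"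
  unfolding frob_sq_def by (intro sum_nonneg) auto

lemma frob_diff_sym: "frob_sq n (\<lambda>a b. X a b - Y a b) = frob_sq n (\<lambda>a b. Y a b - X a b)"
  unfolding frob_sq_def by (simp add: power2_commute)

lemma frob_zero[simp]: "frob_sq n (\<lambda>a b. 0) = 0"
  unfolding frob_sq_def by simp

lemma frob_self: "frob_sq n (\<lambda>a b. X a b - X a b) = 0"
  unfolding frob_sq_def by simp

lemma lap_sym: "L \<in> lap_set n \<Longrightarrow> i < n \<Longrightarrow> j < n \<Longrightarrow> L i j = L j i"
  unfolding lap_set_def by (cases "i = j") auto

lemma lap_row: "L \<in> lap_set n \<Longrightarrow> i < n \<Longrightarrow> (\<Sum>j<n. L i j) = 0"
  unfolding lap_set_def by auto

lemma lap_col: "L \<in> lap_set n \<Longrightarrow> j < n \<Longrightarrow> (\<Sum>i<n. L i j) = 0"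
proof -
  assume a: "L \<in> lap_set n" "j < n"
  have "(\<Sum>i<n. L i j) = (\<Sum>i<n. L j i)" by (rule sum.cong) (auto intro: lap_sym[OF a(1)] a(2))
  also have "\<dots> = 0" using lap_row[OF a] .
  finally show ?thesis .
qed

lemma lap_offdiag: "L \<in> lap_set n \<Longrightarrow> i < n \<Longrightarrow> j < n \<Longrightarrow> i \<noteq> j \<Longrightarrow> L i j \<le> 0"
  unfolding lap_set_def by auto

lemma lap_supp: "L \<in> lap_set n \<Longrightarrow> supported n L"
  unfolding lap_set_def by auto

lemma QP:
  assumes Lt: "Lt \<in> lap_set M"
  shows "(\<Sum>i<M. \<Sum>j<M. Lt i j * ip N (Ls i) (Ls j)) =
     -(1/2) * (\<Sum>i<M. \<Sum>j<M. Lt i j * frob_sq N (\<lambda>a b. Ls i a b - Ls j a b))"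
proof -
  have A: "(\<Sum>i<M. \<Sum>j<M. Lt i j * ip N (Ls i) (Ls i)) = 0"
    by (simp add: sum_distrib_right[symmetric] lap_row[OF Lt])
  have B: "(\<Sum>i<M. \<Sum>j<M. Lt i j * ip N (Ls j) (Ls j)) = 0"
    by (subst sum.swap) (simp add: sum_distrib_right[symmetric] lap_col[OF Lt])
  have "(\<Sum>i<M. \<Sum>j<M. Lt i j * frob_sq N (\<lambda>a b. Ls i a b - Ls j a b)) =
     (\<Sum>i<M. \<Sum>j<M. Lt i j * ip N (Ls i) (Ls i)) - 2 * (\<Sum>i<M. \<Sum>j<M. Lt i j * ip N (Ls i) (Ls j))
       + (\<Sum>i<M. \<Sum>j<M. Lt i j * ip N (Ls j) (Ls j))"
    by (simp add: frob_diff algebra_simps sum.distrib sum_subtractf sum_distrib_left)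
  then show ?thesis using A B by simp
qed

lemma sum_gl_Suc: "i < n \<Longrightarrow> (\<Sum>j\<in>{i<..<Suc n}. f j) = (\<Sum>j\<in>{i<..<n}. f j) + (f n::real)"
proof -
  assume "i < n"
  then have "{i<..<Suc n} = insert n {i<..<n}" by auto
  then show ?thesis by simp
qed

lemma sum_pairs:
  fixes a :: "nat \<Rightarrow> nat \<Rightarrow> real" and n M :: nat
  assumes "\<And>i j. i < M \<Longrightarrow> j < M \<Longrightarrow> a i j = a j i" "\<And>i. i < M \<Longrightarrow> a i i = 0"
  shows "n \<le> M \<Longrightarrow> (\<Sum>i<n. \<Sum>j<n. a i j) = 2 * (\<Sum>i<n. \<Sum>j\<in>{i<..<n}. (a i j::real))"
proof (induction n)
  case 0 then show ?case by simp
next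
  case (Suc n)
  have e1: "(\<Sum>i<Suc n. \<Sum>j<Suc n. a i j) = (\<Sum>i<n. \<Sum>j<n. a i j) + (\<Sum>i<n. a i n) + (\<Sum>j<n. a n j) + a n n"
    by (simp add: sum.distrib)
  have e2: "(\<Sum>i<Suc n. \<Sum>j\<in>{i<..<Suc n}. a i j) = (\<Sum>i<n. \<Sum>j\<in>{i<..<n}. a i j) + (\<Sum>i<n. a i n)"
  proof -
    have "{n<..<Suc n} = {}" by auto
    then show ?thesis by (simp add: sum_gl_Suc sum.distrib)
  qed
  have e3: "(\<Sum>j<n. a n j) = (\<Sum>i<n. a i n)" using Suc.prems by (intro sum.cong) (auto intro: assms(1))
  have e4: "a n n = 0" using Suc.prems assms(2) by auto
  show ?case using Suc e1 e2 e3 e4 by simp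
qed

lemma temporal_half:
  assumes Lt: "Lt \<in> lap_set M"
  shows "temporal_smooth N M Ls Lt = -(1/2) * (\<Sum>i<M. \<Sum>j<M. Lt i j * frob_sq N (\<lambda>a b. Ls i a b - Ls j a b))"
  using QP[OF Lt] by (simp add: temporal_ip)

lemma part1:
  assumes Lt: "Lt \<in> lap_set M"
  shows "temporal_smooth N M Ls Lt =
          (\<Sum>i<M. \<Sum>j\<in>{i<..<M}. tweight Lt i j * frob_sq N (\<lambda>a b. Ls i a b - Ls j a b))"
proof -
  have "(\<Sum>i<M. \<Sum>j<M. Lt i j * frob_sq N (\<lambda>a b. Ls i a b - Ls j a b)) =
     2 * (\<Sum>i<M. \<Sum>j\<in>{i<..<M}. Lt i j * frob_sq N (\<lambda>a b. Ls i a b - Ls j a b))"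
    by (rule sum_pairs[where M=M]) (auto simp: lap_sym[OF Lt] frob_self intro: frob_diff_sym)
  then show ?thesis unfolding temporal_half[OF Lt] tweight_def
    by (simp add: sum_negf)
qed


lemma sum_upd:
  assumes "m \<in> S" "finite S"
  shows "(\<Sum>i\<in>S. g i ((Ls(m:=A)) i)) = g m A + (\<Sum>i\<in>S-{m}. g i (Ls i) :: real)"
proof -
  have "(\<Sum>i\<in>S. g i ((Ls(m:=A)) i)) = g m ((Ls(m:=A)) m) + (\<Sum>i\<in>S-{m}. g i ((Ls(m:=A)) i))"
    by (rule sum.remove[OF assms(2) assms(1)])
  also have "(\<Sum>i\<in>S-{m}. g i ((Ls(m:=A)) i)) = (\<Sum>i\<in>S-{m}. g i (Ls i))"
    by (rule sum.cong) auto
  finally show ?thesis by simp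
qed

definition Rest :: "nat \<Rightarrow> nat \<Rightarrow> (nat \<Rightarrow> nat) \<Rightarrow> (nat \<Rightarrow> mat) \<Rightarrow> real \<Rightarrow> (nat \<Rightarrow> mat) \<Rightarrow> mat \<Rightarrow> nat \<Rightarrow> real" where
  "Rest N M K X \<beta> Ls Lt m =
     (\<Sum>i\<in>{..<M}-{m}. spatial_smooth N (K i) (X i) (Ls i)) + \<beta> * (\<Sum>i\<in>{..<M}-{m}. frob_sq N (Ls i))
     - (1/2) * (\<Sum>i\<in>{..<M}-{m}. \<Sum>j\<in>{..<M}-{m}. Lt i j * frob_sq N (\<lambda>a b. Ls i a b - Ls j a b))
     + \<beta> * frob_sq M Lt"

lemma F_split:
  assumes Lt: "Lt \<in> lap_set M" and m: "m < M"
  shows "objective N M K X \<beta> (Ls(m:=A)) Lt = spatial_subobj N M K X \<beta> Ls Lt m A + Rest N M K X \<beta> Ls Lt m"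
proof -
  define Ls' where "Ls' = Ls(m:=A)"
  define h where "h = (\<lambda>P Q. frob_sq N (\<lambda>a b. P a b - Q a b))"
  have mS: "m \<in> {..<M}" using m by simp
  have s1: "(\<Sum>i<M. spatial_smooth N (K i) (X i) (Ls' i)) = spatial_smooth N (K m) (X m) A
        + (\<Sum>i\<in>{..<M}-{m}. spatial_smooth N (K i) (X i) (Ls i))"
    unfolding Ls'_def using sum_upd[OF mS, where g="\<lambda>i P. spatial_smooth N (K i) (X i) P"] by simp
  have s2: "(\<Sum>i<M. frob_sq N (Ls' i)) = frob_sq N A + (\<Sum>i\<in>{..<M}-{m}. frob_sq N (Ls i))"
    unfolding Ls'_def using sum_upd[OF mS, where g="\<lambda>i P. frob_sq N P"] by simp
  define T where "T = (\<Sum>j\<in>{..<M}-{m}. Lt m j * h A (Ls j))"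
  define R where "R = (\<Sum>i\<in>{..<M}-{m}. \<Sum>j\<in>{..<M}-{m}. Lt i j * h (Ls i) (Ls j))"
  have p1: "(\<Sum>i<M. \<Sum>j<M. Lt i j * h (Ls' i) (Ls' j)) =
      (\<Sum>j<M. Lt m j * h A (Ls' j)) + (\<Sum>i\<in>{..<M}-{m}. \<Sum>j<M. Lt i j * h (Ls i) (Ls' j))"
    unfolding Ls'_def using sum_upd[OF mS, where g="\<lambda>i P. \<Sum>j<M. Lt i j * h P ((Ls(m:=A)) j)"] by simp
  have p2: "(\<Sum>j<M. Lt m j * h A (Ls' j)) = Lt m m * h A A + T"
    unfolding Ls'_def T_def using sum_upd[OF mS, where g="\<lambda>j P. Lt m j * h A P"] by simp
  have p3: "(\<Sum>j<M. Lt i j * h (Ls i) (Ls' j)) = Lt i m * h (Ls i) A + (\<Sum>j\<in>{..<M}-{m}. Lt i j * h (Ls i) (Ls j))" for i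
    unfolding Ls'_def using sum_upd[OF mS, where g="\<lambda>j P. Lt i j * h (Ls i) P"] by simp
  have p4: "(\<Sum>i\<in>{..<M}-{m}. Lt i m * h (Ls i) A) = T"
    unfolding T_def
    by (rule sum.cong) (auto simp: h_def lap_sym[OF Lt _ m] intro: frob_diff_sym)
  have hAA: "h A A = 0" unfolding h_def by (rule frob_self)
  have P: "(\<Sum>i<M. \<Sum>j<M. Lt i j * h (Ls' i) (Ls' j)) = 2 * T + R"
    unfolding p1 p2 p3 sum.distrib p4 R_def hAA by simp
  have sub: "spatial_subobj N M K X \<beta> Ls Lt m A = spatial_smooth N (K m) (X m) A + \<beta> * frob_sq N A - T"
    unfolding spatial_subobj_def T_def tweight_def h_def by (simp add: sum_negf)
  show ?thesis
    unfolding objective_def temporal_half[OF Lt] Ls'_def[symmetric] sub Rest_def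
    using P s1 s2 unfolding h_def R_def by (simp add: algebra_simps)
qed

lemma F_temporal:
  "objective N M K X \<beta> Ls L = (\<Sum>m<M. spatial_smooth N (K m) (X m) (Ls m)) + \<beta> * (\<Sum>m<M. frob_sq N (Ls m))
     + temporal_subobj N M \<beta> Ls L"
  unfolding objective_def temporal_subobj_def by simp

lemma spatial_nonneg:
  assumes "psd N L" shows "0 \<le> spatial_smooth N K X L"
proof -
  have "spatial_smooth N K X L = (\<Sum>k<K. \<Sum>a<N. \<Sum>b<N. X a k * L a b * X b k)"
    unfolding spatial_smooth_def mtrace_def mmult_def transp_def
    by (simp add: sum_distrib_left mult_ac)
  also have "\<dots> \<ge> 0"
  proof (rule sum_nonneg)
    fix k show "0 \<le> (\<Sum>a<N. \<Sum>b<N. X a k * L a b * X b k)"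
      using assms[unfolded psd_def, rule_format, of "\<lambda>a. X a k"] by simp
  qed
  finally show ?thesis .
qed

lemma temporal_nonneg:
  assumes Lt: "Lt \<in> lap_set M" shows "0 \<le> temporal_smooth N M Ls Lt"
  unfolding part1[OF Lt] tweight_def
  by (intro sum_nonneg mult_nonneg_nonneg frob_nonneg) (auto intro!: lap_offdiag[OF Lt])

lemma lap_psd: "L \<in> lap_set n \<Longrightarrow> psd n L"
  unfolding lap_set_def by auto

lemma obj_nonneg:
  assumes "feasible N M Ls Lt" "0 < \<beta>"
  shows "0 \<le> objective N M K X \<beta> Ls Lt"
  using assms unfolding feasible_def objective_def
  by (intro add_nonneg_nonneg sum_nonneg mult_nonneg_nonneg frob_nonneg temporal_nonneg spatial_nonneg lap_psd)
     auto

lemma subobj_nonneg: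
  assumes Lt: "Lt \<in> lap_set M" and L: "L \<in> lap_set N" and "0 < \<beta>" and m: "m < M"
  shows "0 \<le> spatial_subobj N M K X \<beta> Ls Lt m L"
  using assms unfolding spatial_subobj_def tweight_def
  by (intro add_nonneg_nonneg sum_nonneg mult_nonneg_nonneg frob_nonneg spatial_nonneg lap_psd)
     (auto intro!: lap_offdiag[OF Lt])

lemma tsub_nonneg:
  assumes L: "L \<in> lap_set M" and "0 < \<beta>"
  shows "0 \<le> temporal_subobj N M \<beta> Ls L"
  using assms unfolding temporal_subobj_def
  by (intro add_nonneg_nonneg mult_nonneg_nonneg frob_nonneg temporal_nonneg) auto


definition seg :: "mat \<Rightarrow> mat \<Rightarrow> real \<Rightarrow> mat" where
  "seg A B t = (\<lambda>i j. A i j + t * (B i j - A i j))"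

definition convS :: "mat set \<Rightarrow> bool" where
  "convS S \<longleftrightarrow> (\<forall>A\<in>S. \<forall>B\<in>S. \<forall>t. 0 \<le> t \<longrightarrow> t \<le> 1 \<longrightarrow> seg A B t \<in> S)"

definition qconv :: "nat \<Rightarrow> mat set \<Rightarrow> real \<Rightarrow> (mat \<Rightarrow> real) \<Rightarrow> bool" where
  "qconv n S c q \<longleftrightarrow> (\<forall>A\<in>S. \<forall>B\<in>S. \<forall>t. 0 \<le> t \<longrightarrow> t \<le> 1 \<longrightarrow>
     q (seg A B t) \<le> (1-t) * q A + t * q B - c * t * (1-t) * frob_sq n (\<lambda>i j. B i j - A i j))"

definition seqcont :: "nat \<Rightarrow> (mat \<Rightarrow> real) \<Rightarrow> bool" where
  "seqcont n q \<longleftrightarrow> (\<forall>Ak B. (\<forall>i<n. \<forall>j<n. (\<lambda>k. Ak k i j) \<longlonglongrightarrow> B i j) \<longrightarrow> (\<lambda>k. q (Ak k)) \<longlonglongrightarrow> q B)"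

definition closedS :: "nat \<Rightarrow> mat set \<Rightarrow> bool" where
  "closedS n S \<longleftrightarrow> (\<forall>Ak B. (\<forall>k. Ak k \<in> S) \<longrightarrow> supported n B \<longrightarrow>
      (\<forall>i<n. \<forall>j<n. (\<lambda>k. Ak k i j) \<longlonglongrightarrow> B i j) \<longrightarrow> B \<in> S)"

lemma lap_convex: "convS (lap_set n)"
  unfolding convS_def
proof (intro ballI allI impI)
  fix A B and t :: real assume A: "A \<in> lap_set n" and B: "B \<in> lap_set n" and t: "0 \<le> t" "t \<le> 1"
  have sA: "supported n A" and sB: "supported n B" using A B by (auto simp: lap_set_def)
  have "supported n (seg A B t)" using sA sB unfolding supported_def seg_def by auto
  moreover have "psd n (seg A B t)"
    unfolding psd_def
  proof
    fix x :: "nat \<Rightarrow> real"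
    have "(\<Sum>i<n. \<Sum>j<n. x i * seg A B t i j * x j) =
       (1-t) * (\<Sum>i<n. \<Sum>j<n. x i * A i j * x j) + t * (\<Sum>i<n. \<Sum>j<n. x i * B i j * x j)"
      unfolding seg_def by (simp add: algebra_simps sum.distrib sum_subtractf sum_distrib_left)
    also have "\<dots> \<ge> 0" using A B t unfolding lap_set_def psd_def
      by (intro add_nonneg_nonneg mult_nonneg_nonneg) auto
    finally show "0 \<le> (\<Sum>i<n. \<Sum>j<n. x i * seg A B t i j * x j)" .
  qed
  moreover have "mtrace n (seg A B t) = real n"
  proof -
    have "mtrace n (seg A B t) = (1-t) * mtrace n A + t * mtrace n B"
      unfolding seg_def mtrace_def by (simp add: algebra_simps sum.distrib sum_subtractf sum_distrib_left)
    then show ?thesis using A B unfolding lap_set_def by (simp add: algebra_simps)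
  qed
  moreover have "\<forall>i<n. \<forall>j<n. i \<noteq> j \<longrightarrow> seg A B t i j = seg A B t j i \<and> seg A B t i j \<le> 0"
  proof (intro allI impI conjI)
    fix i j assume ij: "i < n" "j < n" "i \<noteq> j"
    show "seg A B t i j = seg A B t j i" using lap_sym[OF A ij(1,2)] lap_sym[OF B ij(1,2)] by (simp add: seg_def)
    have "A i j \<le> 0" "B i j \<le> 0" using lap_offdiag[OF A ij] lap_offdiag[OF B ij] by auto
    then have "(1-t) * A i j + t * B i j \<le> 0" using t
      by (intro add_nonpos_nonpos mult_nonneg_nonpos) auto
    then show "seg A B t i j \<le> 0" by (simp add: seg_def algebra_simps)
  qed
  moreover have "\<forall>i<n. (\<Sum>j<n. seg A B t i j) = 0"
  proof (intro allI impI)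
    fix i assume i: "i < n"
    have "(\<Sum>j<n. seg A B t i j) = (1-t) * (\<Sum>j<n. A i j) + t * (\<Sum>j<n. B i j)"
      unfolding seg_def by (simp add: algebra_simps sum.distrib sum_subtractf sum_distrib_left)
    then show "(\<Sum>j<n. seg A B t i j) = 0" using lap_row[OF A i] lap_row[OF B i] by simp
  qed
  ultimately show "seg A B t \<in> lap_set n" unfolding lap_set_def by blast
qed

lemma frob_seg_diff:
  "frob_sq n (\<lambda>a b. seg A B t a b - Y a b) =
     (1-t) * frob_sq n (\<lambda>a b. A a b - Y a b) + t * frob_sq n (\<lambda>a b. B a b - Y a b)
     - t * (1-t) * frob_sq n (\<lambda>a b. B a b - A a b)"
proof -
  have e: "(x + t * (z - x) - y)\<^sup>2 = (1-t) * (x - y)\<^sup>2 + t * (z - y)\<^sup>2 - t * (1-t) * (z - x)\<^sup>2" for x y z :: real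
    by (simp add: power2_eq_square algebra_simps)
  show ?thesis unfolding frob_sq_def seg_def e
    by (simp add: sum.distrib sum_subtractf sum_distrib_left)
qed

lemma frob_seg:
  "frob_sq n (seg A B t) = (1-t) * frob_sq n A + t * frob_sq n B - t * (1-t) * frob_sq n (\<lambda>a b. B a b - A a b)"
  using frob_seg_diff[of n A B t "\<lambda>a b. 0"] by (simp add: seg_def)

lemma ip_seg: "ip n (seg A B t) C = (1-t) * ip n A C + t * ip n B C"
  unfolding ip_def seg_def by (simp add: algebra_simps sum.distrib sum_subtractf sum_distrib_left)

lemma spatial_seg: "spatial_smooth N K X (seg A B t) = (1-t) * spatial_smooth N K X A + t * spatial_smooth N K X B"
  unfolding spatial_ip ip_seg ..

lemma temporal_seg: "temporal_smooth N M Ls (seg A B t) = (1-t) * temporal_smooth N M Ls A + t * temporal_smooth N M Ls B"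
  unfolding temporal_ip seg_def by (simp add: algebra_simps sum.distrib sum_subtractf sum_distrib_left)

lemma qconv_subobj:
  assumes Lt: "Lt \<in> lap_set M" and m: "m < M"
  shows "qconv N S \<beta> (spatial_subobj N M K X \<beta> Ls Lt m)"
  unfolding qconv_def
proof (intro ballI allI impI)
  fix A B t assume t: "0 \<le> t" "t \<le> (1::real)"
  define w where "w = (\<lambda>j. tweight Lt m j)"
  define g where "g = (\<lambda>P j. frob_sq N (\<lambda>a b. P a b - Ls j a b))"
  define f where "f = frob_sq N (\<lambda>a b. B a b - A a b)"
  let ?J = "{..<M}-{m}"
  have w0: "j \<in> ?J \<Longrightarrow> 0 \<le> w j" for j using lap_offdiag[OF Lt m] unfolding w_def tweight_def by force
  have f0: "0 \<le> f" unfolding f_def by (rule frob_nonneg)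
  have sw: "(\<Sum>j\<in>?J. w j * frob_sq N (\<lambda>a b. seg A B t a b - Ls j a b)) = (1-t) * (\<Sum>j\<in>?J. w j * frob_sq N (\<lambda>a b. A a b - Ls j a b)) + t * (\<Sum>j\<in>?J. w j * frob_sq N (\<lambda>a b. B a b - Ls j a b))
      - t * (1-t) * f * (\<Sum>j\<in>?J. w j)"
    unfolding frob_seg_diff f_def by (simp add: algebra_simps sum.distrib sum_subtractf sum_distrib_left sum_distrib_right)
  have "0 \<le> t * (1-t) * f * (\<Sum>j\<in>?J. w j)"
    using t f0 w0 by (intro mult_nonneg_nonneg sum_nonneg) auto
  then show "spatial_subobj N M K X \<beta> Ls Lt m (seg A B t)
          \<le> (1 - t) * spatial_subobj N M K X \<beta> Ls Lt m A + t * spatial_subobj N M K X \<beta> Ls Lt m B -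
             \<beta> * t * (1 - t) * frob_sq N (\<lambda>i j. B i j - A i j)"
    using sw unfolding spatial_subobj_def spatial_seg frob_seg w_def[symmetric] f_def[symmetric]
    by (simp add: algebra_simps)
qed

lemma qconv_tsub: "qconv M S \<beta> (temporal_subobj N M \<beta> Ls)"
  unfolding qconv_def temporal_subobj_def temporal_seg frob_seg by (simp add: algebra_simps)


lemma frob_entry:
  assumes "i < n" "j < n" shows "(A i j)\<^sup>2 \<le> frob_sq n A"
proof -
  have "(A i j)\<^sup>2 \<le> (\<Sum>b<n. (A i b)\<^sup>2)"
    using assms by (intro member_le_sum) auto
  also have "\<dots> \<le> (\<Sum>a<n. \<Sum>b<n. (A a b)\<^sup>2)"
    using assms by (intro member_le_sum[of i "{..<n}" "\<lambda>a. \<Sum>b<n. (A a b)\<^sup>2"] sum_nonneg) auto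
  finally show ?thesis unfolding frob_sq_def .
qed

lemma frob_zero_eq: "frob_sq n A \<le> 0 \<Longrightarrow> i < n \<Longrightarrow> j < n \<Longrightarrow> A i j = 0"
proof -
  assume "frob_sq n A \<le> 0" "i < n" "j < n"
  then have "(A i j)\<^sup>2 \<le> 0" using frob_entry[of i n j A] by linarith
  then show "A i j = 0" by simp
qed

lemma qconv_decrease:
  assumes qc: "qconv n S c q" and cv: "convS S" and A: "is_argmin S q A" and B: "B \<in> S"
  shows "q A + c/2 * frob_sq n (\<lambda>i j. B i j - A i j) \<le> q B"
proof -
  have AS: "A \<in> S" using A unfolding is_argmin_def by auto
  have "seg A B (1/2) \<in> S" using cv AS B unfolding convS_def by auto
  then have "q A \<le> q (seg A B (1/2))" using A unfolding is_argmin_def by auto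
  also have "\<dots> \<le> (1-1/2) * q A + 1/2 * q B - c * (1/2) * (1-1/2) * frob_sq n (\<lambda>i j. B i j - A i j)"
    using qc[unfolded qconv_def, rule_format, OF AS B, of "1/2"] by simp
  finally show ?thesis by simp
qed

lemma qconv_unique:
  assumes c: "0 < c" and qc: "qconv n S c q" and cv: "convS S" and sp: "\<forall>A\<in>S. supported n A"
    and A: "is_argmin S q A" and B: "is_argmin S q B"
  shows "A = B"
proof -
  have AS: "A \<in> S" and BS: "B \<in> S" using A B unfolding is_argmin_def by auto
  have "q A + c/2 * frob_sq n (\<lambda>i j. B i j - A i j) \<le> q B" by (rule qconv_decrease[OF qc cv A BS])
  moreover have "q B \<le> q A" using B AS unfolding is_argmin_def by auto
  ultimately have "c/2 * frob_sq n (\<lambda>i j. B i j - A i j) \<le> 0" by simp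
  then have f: "frob_sq n (\<lambda>i j. B i j - A i j) \<le> 0" using c by (simp add: mult_le_0_iff)
  show "A = B"
  proof (intro ext)
    fix i j
    show "A i j = B i j"
    proof (cases "i < n \<and> j < n")
      case True then show ?thesis using frob_zero_eq[OF f] by force
    next
      case False then show ?thesis using sp AS BS unfolding supported_def by (metis not_less)
    qed
  qed
qed

lemma avg2: "x \<le> z \<Longrightarrow> y \<le> z \<Longrightarrow> (x + y) / 2 \<le> (z::real)"
  by (simp add: field_simps)

lemma qconv_exists:
  assumes c: "0 < c" and qc: "qconv n S c q" and cv: "convS S" and ne: "S \<noteq> {}"
    and cl: "closedS n S" and nn: "\<forall>A\<in>S. 0 \<le> q A" and sc: "seqcont n q"
  shows "\<exists>A. is_argmin S q A"
proof -
  define v where "v = Inf (q ` S)"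
  have bdd: "bdd_below (q ` S)" using nn by (auto intro!: bdd_belowI[of _ 0])
  have vle: "A \<in> S \<Longrightarrow> v \<le> q A" for A unfolding v_def using bdd by (auto intro: cInf_lower)
  have "\<forall>k. \<exists>A\<in>S. q A < v + inverse (real (Suc k))"
  proof
    fix k
    have "v < v + inverse (real (Suc k))" by simp
    then obtain y where "y \<in> q ` S" "y < v + inverse (real (Suc k))"
      using cInf_lessD[of "q ` S"] ne unfolding v_def by blast
    then show "\<exists>A\<in>S. q A < v + inverse (real (Suc k))" by auto
  qed
  then obtain Ak where AkS: "\<forall>k. Ak k \<in> S" and Akq: "\<forall>k. q (Ak k) < v + inverse (real (Suc k))" by metis
  have gap: "c/4 * frob_sq n (\<lambda>i j. Ak l i j - Ak k i j) < (inverse (real (Suc k)) + inverse (real (Suc l)))/2" for k l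
  proof -
    have "seg (Ak k) (Ak l) (1/2) \<in> S" using cv AkS unfolding convS_def by auto
    then have "v \<le> q (seg (Ak k) (Ak l) (1/2))" by (rule vle)
    also have "\<dots> \<le> (1-1/2) * q (Ak k) + 1/2 * q (Ak l) - c * (1/2) * (1-1/2) * frob_sq n (\<lambda>i j. Ak l i j - Ak k i j)"
      using qc[unfolded qconv_def, rule_format, OF AkS[rule_format, of k] AkS[rule_format, of l], of "1/2"] by simp
    finally show ?thesis using Akq[rule_format, of k] Akq[rule_format, of l] by simp
  qed
  have cau: "Cauchy (\<lambda>k. Ak k i j)" if ij: "i < n" "j < n" for i j
  proof (rule metric_CauchyI)
    fix e :: real assume e: "0 < e"
    obtain K :: nat where K: "4 / (c * e^2) < real K" using reals_Archimedean2 by blast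
    have ce: "0 < c * e^2" using c e by simp
    have "4 < c * e^2 * real K" using K ce by (simp add: field_simps)
    then have "4 < c * e^2 * real (Suc K)" using ce by (simp add: algebra_simps)
    then have iK: "inverse (real (Suc K)) < c * e^2 / 4" by (simp add: field_simps)
    have "\<forall>a\<ge>K. \<forall>b\<ge>K. dist (Ak a i j) (Ak b i j) < e"
    proof (intro allI impI)
      fix a b assume a: "K \<le> a" and b: "K \<le> b"
      have ia: "inverse (real (Suc a)) \<le> inverse (real (Suc K))" using a by (simp add: field_simps)
      have ib: "inverse (real (Suc b)) \<le> inverse (real (Suc K))" using b by (simp add: field_simps)
      have d1: "(Ak b i j - Ak a i j)\<^sup>2 \<le> frob_sq n (\<lambda>i j. Ak b i j - Ak a i j)"
        using frob_entry[OF ij, of "\<lambda>i j. Ak b i j - Ak a i j"] by simp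
      have d2: "c/4 * frob_sq n (\<lambda>i j. Ak b i j - Ak a i j) < inverse (real (Suc K))"
      proof -
        have "(inverse (real (Suc a)) + inverse (real (Suc b))) / 2 \<le> inverse (real (Suc K))"
          by (rule avg2[OF ia ib])
        then show ?thesis using less_le_trans[OF gap[of b a]] by blast
      qed
      have "c/4 * (Ak b i j - Ak a i j)\<^sup>2 \<le> c/4 * frob_sq n (\<lambda>i j. Ak b i j - Ak a i j)"
        using c by (intro mult_left_mono[OF d1]) simp
      also note d2
      also note iK
      also have "c * e^2 / 4 = c/4 * e^2" by simp
      finally have "c/4 * (Ak b i j - Ak a i j)\<^sup>2 < c/4 * e^2" .
      then have "(Ak b i j - Ak a i j)\<^sup>2 < e^2" using c by simp
      then have "\<bar>Ak b i j - Ak a i j\<bar> < e" using e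
        by (metis abs_power2 order_less_le power2_abs power_less_imp_less_base)
      then show "dist (Ak a i j) (Ak b i j) < e" by (simp add: dist_real_def abs_minus_commute)
    qed
    then show "\<exists>M. \<forall>m\<ge>M. \<forall>n\<ge>M. dist (Ak m i j) (Ak n i j) < e" by blast
  qed
  define B where "B = (\<lambda>i j. if i < n \<and> j < n then lim (\<lambda>k. Ak k i j) else 0)"
  have conv: "\<forall>i<n. \<forall>j<n. (\<lambda>k. Ak k i j) \<longlonglongrightarrow> B i j"
    using cau by (auto simp: B_def Cauchy_convergent_iff convergent_LIMSEQ_iff)
  have supp: "supported n B" unfolding supported_def B_def by auto
  have BS: "B \<in> S" using cl AkS supp conv unfolding closedS_def by blast
  have t1: "(\<lambda>k. q (Ak k)) \<longlonglongrightarrow> q B" using sc conv unfolding seqcont_def by blast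
  have t2: "(\<lambda>k. q (Ak k)) \<longlonglongrightarrow> v"
  proof (rule tendsto_sandwich[of "\<lambda>k. v" _ _ "\<lambda>k. v + inverse (real (Suc k))"])
    show "eventually (\<lambda>k. v \<le> q (Ak k)) sequentially" using vle AkS by (auto intro!: always_eventually)
    show "eventually (\<lambda>k. q (Ak k) \<le> v + inverse (real (Suc k))) sequentially"
      using Akq by (auto intro!: always_eventually less_imp_le)
    show "(\<lambda>k. v) \<longlonglongrightarrow> v" by simp
    show "(\<lambda>k. v + inverse (real (Suc k))) \<longlonglongrightarrow> v"
      using tendsto_add[OF tendsto_const LIMSEQ_inverse_real_of_nat, of v] by simp
  qed
  have "q B = v" using LIMSEQ_unique[OF t1 t2] .
  then show ?thesis unfolding is_argmin_def using BS vle by auto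
qed

lemma lap_closed: "closedS n (lap_set n)"
  unfolding closedS_def
proof (intro allI impI)
  fix Ak :: "nat \<Rightarrow> mat" and B
  assume AkS: "\<forall>k. Ak k \<in> lap_set n" and supp: "supported n B"
    and conv: "\<forall>i<n. \<forall>j<n. (\<lambda>k. Ak k i j) \<longlonglongrightarrow> B i j"
  have "psd n B" unfolding psd_def
  proof
    fix x :: "nat \<Rightarrow> real"
    have lim: "(\<lambda>k. \<Sum>i<n. \<Sum>j<n. x i * Ak k i j * x j) \<longlonglongrightarrow> (\<Sum>i<n. \<Sum>j<n. x i * B i j * x j)"
      using conv by (intro tendsto_sum tendsto_mult tendsto_const) auto
    show "0 \<le> (\<Sum>i<n. \<Sum>j<n. x i * B i j * x j)"
      by (rule LIMSEQ_le_const[OF lim]) (use AkS in \<open>auto simp: lap_set_def psd_def\<close>)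
  qed
  moreover have "mtrace n B = real n"
  proof -
    have lim: "(\<lambda>k. mtrace n (Ak k)) \<longlonglongrightarrow> mtrace n B"
      unfolding mtrace_def using conv by (intro tendsto_sum) auto
    have "(\<lambda>k. mtrace n (Ak k)) = (\<lambda>k. real n)" using AkS by (auto simp: lap_set_def)
    then show ?thesis using lim LIMSEQ_unique[OF _ tendsto_const] by metis
  qed
  moreover have "\<forall>i<n. \<forall>j<n. i \<noteq> j \<longrightarrow> B i j = B j i \<and> B i j \<le> 0"
  proof (intro allI impI conjI)
    fix i j assume ij: "i < n" "j < n" "i \<noteq> j"
    have "(\<lambda>k. Ak k i j) = (\<lambda>k. Ak k j i)" using AkS ij by (auto intro: lap_sym)
    then show "B i j = B j i" using conv ij LIMSEQ_unique by metis
    have "\<forall>k. Ak k i j \<le> 0" using AkS ij lap_offdiag by blast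
    then show "B i j \<le> 0"
      using LIMSEQ_le_const2[of "\<lambda>k. Ak k i j" "B i j" 0] conv ij by blast
  qed
  moreover have "\<forall>i<n. (\<Sum>j<n. B i j) = 0"
  proof (intro allI impI)
    fix i assume i: "i < n"
    have lim: "(\<lambda>k. \<Sum>j<n. Ak k i j) \<longlonglongrightarrow> (\<Sum>j<n. B i j)"
      using conv i by (intro tendsto_sum) auto
    have "(\<lambda>k. \<Sum>j<n. Ak k i j) = (\<lambda>k. 0)" using AkS i by (auto intro: lap_row)
    then show "(\<Sum>j<n. B i j) = 0" using lim LIMSEQ_unique[OF _ tendsto_const] by metis
  qed
  ultimately show "B \<in> lap_set n" using supp unfolding lap_set_def by blast
qed

lemma seqcont_subobj: "seqcont N (spatial_subobj N M K X \<beta> Ls Lt m)"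
  unfolding seqcont_def spatial_subobj_def spatial_smooth_def mtrace_def mmult_def transp_def frob_sq_def
  by (auto intro!: tendsto_intros)

lemma seqcont_tsub: "seqcont M (temporal_subobj N M \<beta> Ls)"
  unfolding seqcont_def temporal_subobj_def temporal_ip frob_sq_def
  by (auto intro!: tendsto_intros)

lemma obj_ip: "objective N M K X \<beta> Ls Lt =
   (\<Sum>m<M. ip N (Ls m) (Cm (K m) (X m))) + \<beta> * (\<Sum>m<M. ip N (Ls m) (Ls m))
   + (\<Sum>i<M. \<Sum>j<M. Lt i j * ip N (Ls i) (Ls j)) + \<beta> * ip M Lt Lt"
  unfolding objective_def spatial_ip temporal_ip frob_ip ..

lemma ipL: "ip n (\<lambda>a b. A a b + t * B a b) C = ip n A C + t * ip n B C"
  unfolding ip_def by (simp add: algebra_simps sum.distrib sum_distrib_left)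

lemma ipR: "ip n C (\<lambda>a b. A a b + t * B a b) = ip n C A + t * ip n C B"
  unfolding ip_def by (simp add: algebra_simps sum.distrib sum_distrib_left)

lemma d_lin: "((\<lambda>t. x + t * y) has_real_derivative y) (at 0)"
  by (auto intro!: derivative_eq_intros)

lemma d_quad: "((\<lambda>t. a + t * b + t * (c + t * d)) has_real_derivative (b + c)) (at 0)"
  by (auto intro!: derivative_eq_intros)

lemma d_cub: "((\<lambda>t. (p + t * q) * (a + t * b + t * (c + t * d))) has_real_derivative (q * a + p * (b + c))) (at 0)"
  by (auto intro!: derivative_eq_intros)

definition dF :: "nat \<Rightarrow> nat \<Rightarrow> (nat \<Rightarrow> nat) \<Rightarrow> (nat \<Rightarrow> mat) \<Rightarrow> real \<Rightarrow> (nat \<Rightarrow> mat) \<Rightarrow> mat \<Rightarrow> (nat \<Rightarrow> mat) \<Rightarrow> mat \<Rightarrow> real" where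
  "dF N M K X \<beta> Ls Lt D E =
     (\<Sum>m<M. ip N (D m) (Cm (K m) (X m)))
     + \<beta> * (\<Sum>m<M. ip N (Ls m) (D m) + ip N (D m) (Ls m))
     + (\<Sum>i<M. \<Sum>j<M. E i j * ip N (Ls i) (Ls j) + Lt i j * (ip N (Ls i) (D j) + ip N (D i) (Ls j)))
     + \<beta> * (ip M Lt E + ip M E Lt)"

lemma derivF:
  "((\<lambda>t. objective N M K X \<beta> (\<lambda>m a b. Ls m a b + t * D m a b) (\<lambda>a b. Lt a b + t * E a b))
     has_real_derivative dF N M K X \<beta> Ls Lt D E) (at 0)"
proof -
  have eq: "(\<lambda>t. objective N M K X \<beta> (\<lambda>m a b. Ls m a b + t * D m a b) (\<lambda>a b. Lt a b + t * E a b)) =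
    (\<lambda>t. (\<Sum>m<M. ip N (Ls m) (Cm (K m) (X m)) + t * ip N (D m) (Cm (K m) (X m)))
     + \<beta> * (\<Sum>m<M. ip N (Ls m) (Ls m) + t * ip N (Ls m) (D m) + t * (ip N (D m) (Ls m) + t * ip N (D m) (D m)))
     + (\<Sum>i<M. \<Sum>j<M. (Lt i j + t * E i j) * (ip N (Ls i) (Ls j) + t * ip N (Ls i) (D j) + t * (ip N (D i) (Ls j) + t * ip N (D i) (D j))))
     + \<beta> * (ip M Lt Lt + t * ip M Lt E + t * (ip M E Lt + t * ip M E E)))"
    by (rule ext) (simp only: obj_ip ipL ipR)
  have h1: "((\<lambda>t. \<Sum>m<M. ip N (Ls m) (Cm (K m) (X m)) + t * ip N (D m) (Cm (K m) (X m)))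
      has_real_derivative (\<Sum>m<M. ip N (D m) (Cm (K m) (X m)))) (at 0)"
    by (rule DERIV_sum, rule d_lin)
  have h2: "((\<lambda>t. \<beta> * (\<Sum>m<M. ip N (Ls m) (Ls m) + t * ip N (Ls m) (D m) + t * (ip N (D m) (Ls m) + t * ip N (D m) (D m))))
      has_real_derivative \<beta> * (\<Sum>m<M. ip N (Ls m) (D m) + ip N (D m) (Ls m))) (at 0)"
    by (rule DERIV_cmult, rule DERIV_sum, rule d_quad)
  have h3: "((\<lambda>t. \<Sum>i<M. \<Sum>j<M. (Lt i j + t * E i j) * (ip N (Ls i) (Ls j) + t * ip N (Ls i) (D j) + t * (ip N (D i) (Ls j) + t * ip N (D i) (D j))))
      has_real_derivative (\<Sum>i<M. \<Sum>j<M. E i j * ip N (Ls i) (Ls j) + Lt i j * (ip N (Ls i) (D j) + ip N (D i) (Ls j)))) (at 0)"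
    by (rule DERIV_sum, rule DERIV_sum, rule d_cub)
  have h4: "((\<lambda>t. \<beta> * (ip M Lt Lt + t * ip M Lt E + t * (ip M E Lt + t * ip M E E)))
      has_real_derivative \<beta> * (ip M Lt E + ip M E Lt)) (at 0)"
    by (rule DERIV_cmult, rule d_quad)
  show ?thesis unfolding eq dF_def
    by (rule DERIV_add[OF DERIV_add[OF DERIV_add[OF h1 h2] h3] h4])
qed

lemma deriv_min:
  assumes d: "(f has_real_derivative d) (at 0)" and mn: "\<forall>t. 0 < t \<longrightarrow> t \<le> 1 \<longrightarrow> f 0 \<le> f t"
  shows "0 \<le> d"
proof -
  have "(f has_real_derivative d) (at 0 within {0<..})" by (rule has_field_derivative_at_within[OF d])
  then have lim: "((\<lambda>y. (f y - f 0) / (y - 0)) \<longlongrightarrow> d) (at_right 0)"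
    by (simp add: has_field_derivative_iff)
  have ev: "eventually (\<lambda>y. 0 \<le> (f y - f 0) / (y - 0)) (at_right (0::real))"
    unfolding eventually_at_right_field
    by (rule exI[of _ 1]) (use mn in auto)
  show ?thesis by (rule tendsto_lowerbound[OF lim ev]) simp
qed

definition Dm :: "(nat \<Rightarrow> mat) \<Rightarrow> nat \<Rightarrow> nat \<Rightarrow> mat" where
  "Dm D m = (\<lambda>j a b. if j = m then D m a b else 0)"

lemma ip_ifL: "ip n (\<lambda>a b. if P then A a b else 0) C = (if P then ip n A C else 0)"
  by (cases P) (simp_all add: ip_def)

lemma ip_ifR: "ip n C (\<lambda>a b. if P then A a b else 0) = (if P then ip n C A else 0)"
  by (cases P) (simp_all add: ip_def)

lemma ip_zeroL[simp]: "ip n (\<lambda>a b. 0) C = 0" by (simp add: ip_def)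
lemma ip_zeroR[simp]: "ip n C (\<lambda>a b. 0) = 0" by (simp add: ip_def)

lemma dF_decomp:
  "dF N M K X \<beta> Ls Lt D E = (\<Sum>m<M. dF N M K X \<beta> Ls Lt (Dm D m) (\<lambda>a b. 0)) + dF N M K X \<beta> Ls Lt (\<lambda>m a b. 0) E"
proof -
  have a1: "(\<Sum>m<M. \<Sum>i<M. (if i = m then f i else 0)) = (\<Sum>i<M. f i :: real)" for f
    by (subst sum.swap) simp
  have b1: "(\<Sum>m<M. \<Sum>i<M. \<Sum>j<M. if j = m then Lt i j * f i m else Lt i j * 0)
      = (\<Sum>i<M. \<Sum>j<M. Lt i j * f i j)" for f :: "nat \<Rightarrow> nat \<Rightarrow> real"
    by (subst sum_rot3) (simp cong: if_cong)
  have b2: "(\<Sum>m<M. \<Sum>i<M. \<Sum>j<M. if i = m then Lt i j * f m j else Lt i j * 0)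
      = (\<Sum>i<M. \<Sum>j<M. Lt i j * f i j)" for f :: "nat \<Rightarrow> nat \<Rightarrow> real"
    by (subst sum_rot3) (simp cong: if_cong)
  show ?thesis
    unfolding dF_def Dm_def ip_ifL ip_ifR
    apply (simp add: a1 sum.distrib sum_distrib_left[symmetric] if_distrib[of "\<lambda>x. _ * x"] algebra_simps)
    apply (simp only: b1 b2)
    done
qed

definition W :: "(nat \<Rightarrow> nat \<Rightarrow> mat) \<Rightarrow> nat \<Rightarrow> nat \<Rightarrow> nat \<Rightarrow> mat" where
  "W S k m = (\<lambda>j. if j < m then S (Suc k) j else S k j)"

lemma run_feas:
  assumes run: "spateogl_run N M K X \<beta> S T"
  shows "(\<forall>m<M. S k m \<in> lap_set N) \<and> T k \<in> lap_set M"
  by (cases k) (use run in \<open>auto simp: spateogl_run_def feasible_def is_argmin_def\<close>)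

lemma obj_cong:
  assumes "\<And>m. m < M \<Longrightarrow> Ls m = Ls' m"
  shows "objective N M K X \<beta> Ls Lt = objective N M K X \<beta> Ls' Lt"
proof -
  have e1: "(\<Sum>m<M. ip N (Ls m) (Cm (K m) (X m))) = (\<Sum>m<M. ip N (Ls' m) (Cm (K m) (X m)))"
    by (rule sum.cong) (auto simp: assms)
  have e2: "(\<Sum>m<M. ip N (Ls m) (Ls m)) = (\<Sum>m<M. ip N (Ls' m) (Ls' m))"
    by (rule sum.cong) (auto simp: assms)
  have e3: "(\<Sum>i<M. \<Sum>j<M. Lt i j * ip N (Ls i) (Ls j)) = (\<Sum>i<M. \<Sum>j<M. Lt i j * ip N (Ls' i) (Ls' j))"
    by (intro sum.cong refl) (auto simp: assms)
  show ?thesis unfolding obj_ip e1 e2 e3 ..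
qed

lemma step_spatial:
  assumes run: "spateogl_run N M K X \<beta> S T" and m: "m < M"
  shows "objective N M K X \<beta> (W S k (Suc m)) (T k) + \<beta>/2 * frob_sq N (\<lambda>a b. S k m a b - S (Suc k) m a b)
           \<le> objective N M K X \<beta> (W S k m) (T k)"
    and "\<forall>L\<in>lap_set N. objective N M K X \<beta> (W S k (Suc m)) (T k) \<le> objective N M K X \<beta> ((W S k (Suc m))(m:=L)) (T k)"
proof -
  have Tk: "T k \<in> lap_set M" and Sk: "S k m \<in> lap_set N" using run_feas[OF run, of k] m by auto
  have am: "is_argmin (lap_set N) (spatial_subobj N M K X \<beta> (W S k m) (T k) m) (S (Suc k) m)"
    using run m unfolding spateogl_run_def W_def by auto
  note sp = F_split[OF Tk m, of N K X \<beta> "W S k m"]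
  have e1: "(W S k m)(m := S (Suc k) m) = W S k (Suc m)" by (rule ext) (simp add: W_def)
  have e2: "(W S k m)(m := S k m) = W S k m" by (rule ext) (simp add: W_def)
  have e3: "(W S k (Suc m))(m := L) = (W S k m)(m := L)" for L by (rule ext) (simp add: W_def)
  have dec: "spatial_subobj N M K X \<beta> (W S k m) (T k) m (S (Suc k) m) + \<beta>/2 * frob_sq N (\<lambda>i j. S k m i j - S (Suc k) m i j)
      \<le> spatial_subobj N M K X \<beta> (W S k m) (T k) m (S k m)"
    by (rule qconv_decrease[OF qconv_subobj[OF Tk m] lap_convex am Sk])
  show "objective N M K X \<beta> (W S k (Suc m)) (T k) + \<beta>/2 * frob_sq N (\<lambda>a b. S k m a b - S (Suc k) m a b)
           \<le> objective N M K X \<beta> (W S k m) (T k)"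
    using dec sp[of "S (Suc k) m"] sp[of "S k m"] unfolding e1 e2 by simp
  show "\<forall>L\<in>lap_set N. objective N M K X \<beta> (W S k (Suc m)) (T k) \<le> objective N M K X \<beta> ((W S k (Suc m))(m:=L)) (T k)"
  proof
    fix L assume L: "L \<in> lap_set N"
    have "spatial_subobj N M K X \<beta> (W S k m) (T k) m (S (Suc k) m) \<le> spatial_subobj N M K X \<beta> (W S k m) (T k) m L"
      using am L unfolding is_argmin_def by auto
    then show "objective N M K X \<beta> (W S k (Suc m)) (T k) \<le> objective N M K X \<beta> ((W S k (Suc m))(m:=L)) (T k)"
      using sp[of "S (Suc k) m"] sp[of L] unfolding e1 e3 by simp
  qed
qed

lemma step_temporal:
  assumes run: "spateogl_run N M K X \<beta> S T"
  shows "objective N M K X \<beta> (S (Suc k)) (T (Suc k)) + \<beta>/2 * frob_sq M (\<lambda>a b. T k a b - T (Suc k) a b)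
           \<le> objective N M K X \<beta> (S (Suc k)) (T k)"
    and "\<forall>L\<in>lap_set M. objective N M K X \<beta> (S (Suc k)) (T (Suc k)) \<le> objective N M K X \<beta> (S (Suc k)) L"
proof -
  have Tk: "T k \<in> lap_set M" using run_feas[OF run, of k] by auto
  have am: "is_argmin (lap_set M) (temporal_subobj N M \<beta> (S (Suc k))) (T (Suc k))"
    using run unfolding spateogl_run_def by auto
  have dec: "temporal_subobj N M \<beta> (S (Suc k)) (T (Suc k)) + \<beta>/2 * frob_sq M (\<lambda>i j. T k i j - T (Suc k) i j)
      \<le> temporal_subobj N M \<beta> (S (Suc k)) (T k)"
    by (rule qconv_decrease[OF qconv_tsub lap_convex am Tk])
  then show "objective N M K X \<beta> (S (Suc k)) (T (Suc k)) + \<beta>/2 * frob_sq M (\<lambda>a b. T k a b - T (Suc k) a b)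
           \<le> objective N M K X \<beta> (S (Suc k)) (T k)"
    unfolding F_temporal by simp
  show "\<forall>L\<in>lap_set M. objective N M K X \<beta> (S (Suc k)) (T (Suc k)) \<le> objective N M K X \<beta> (S (Suc k)) L"
    using am unfolding F_temporal is_argmin_def by auto
qed

lemma drop_nonneg: "a + c \<le> b \<Longrightarrow> 0 \<le> c \<Longrightarrow> a \<le> (b::real)"
  by linarith

lemma bf_nonneg: "0 < \<beta> \<Longrightarrow> 0 \<le> \<beta>/2 * frob_sq n A"
  by (intro mult_nonneg_nonneg frob_nonneg) auto

lemma chain:
  assumes run: "spateogl_run N M K X \<beta> S T" and "0 < \<beta>"
  shows "a \<le> b \<Longrightarrow> b \<le> M \<Longrightarrow> objective N M K X \<beta> (W S k b) (T k) \<le> objective N M K X \<beta> (W S k a) (T k)"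
proof (induction b)
  case 0 then show ?case by simp
next
  case (Suc b)
  show ?case
  proof (cases "a = Suc b")
    case True then show ?thesis by simp
  next
    case False
    then have ab: "a \<le> b" using Suc.prems by simp
    have "objective N M K X \<beta> (W S k (Suc b)) (T k) \<le> objective N M K X \<beta> (W S k b) (T k)"
      using Suc.prems by (intro drop_nonneg[OF step_spatial(1)[OF run, of b k] bf_nonneg[OF assms(2)]]) simp
    also have "\<dots> \<le> objective N M K X \<beta> (W S k a) (T k)" using Suc.IH ab Suc.prems by simp
    finally show ?thesis .
  qed
qed

lemma W0: "W S k 0 = S k" by (rule ext) (simp add: W_def)

lemma WM: "objective N M K X \<beta> (W S k M) (T k) = objective N M K X \<beta> (S (Suc k)) (T k)"
  by (rule obj_cong) (simp add: W_def)

lemma descentS: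
  assumes run: "spateogl_run N M K X \<beta> S T" and b: "0 < \<beta>" and m: "m < M"
  shows "objective N M K X \<beta> (S (Suc k)) (T (Suc k)) + \<beta>/2 * frob_sq N (\<lambda>a b. S k m a b - S (Suc k) m a b)
     \<le> objective N M K X \<beta> (S k) (T k)"
proof -
  have "objective N M K X \<beta> (S (Suc k)) (T (Suc k)) \<le> objective N M K X \<beta> (S (Suc k)) (T k)"
    by (rule drop_nonneg[OF step_temporal(1)[OF run, of k] bf_nonneg[OF b]])
  also have "\<dots> \<le> objective N M K X \<beta> (W S k (Suc m)) (T k)"
    using chain[OF run b, of "Suc m" M k] m WM[of N M K X \<beta> S k T] by simp
  finally have 1: "objective N M K X \<beta> (S (Suc k)) (T (Suc k)) \<le> objective N M K X \<beta> (W S k (Suc m)) (T k)" .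
  have 2: "objective N M K X \<beta> (W S k m) (T k) \<le> objective N M K X \<beta> (S k) (T k)"
    using chain[OF run b, of 0 m k] m W0[of S k] by simp
  show ?thesis using 1 2 step_spatial(1)[OF run m, of k] by simp
qed

lemma descentT:
  assumes run: "spateogl_run N M K X \<beta> S T" and b: "0 < \<beta>"
  shows "objective N M K X \<beta> (S (Suc k)) (T (Suc k)) + \<beta>/2 * frob_sq M (\<lambda>a b. T k a b - T (Suc k) a b)
     \<le> objective N M K X \<beta> (S k) (T k)"
proof -
  have "objective N M K X \<beta> (S (Suc k)) (T k) = objective N M K X \<beta> (W S k M) (T k)"
    using WM[of N M K X \<beta> S k T] by simp
  also have "\<dots> \<le> objective N M K X \<beta> (W S k 0) (T k)"
    using chain[OF run b, of 0 M k] by simp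
  also have "\<dots> = objective N M K X \<beta> (S k) (T k)" by (simp add: W0)
  finally show ?thesis using step_temporal(1)[OF run, of k] by simp
qed

lemma monotone_obj:
  assumes run: "spateogl_run N M K X \<beta> S T" and b: "0 < \<beta>"
  shows "objective N M K X \<beta> (S (Suc k)) (T (Suc k)) \<le> objective N M K X \<beta> (S k) (T k)"
  by (rule drop_nonneg[OF descentT[OF run b, of k] bf_nonneg[OF b]])

lemma sq_to0:
  fixes x y :: "nat \<Rightarrow> real"
  assumes "\<forall>k. (x k)\<^sup>2 \<le> y k" "y \<longlonglongrightarrow> 0"
  shows "x \<longlonglongrightarrow> 0"
proof -
  have "(\<lambda>k. (x k)\<^sup>2) \<longlonglongrightarrow> 0"
  proof (rule tendsto_sandwich[of "\<lambda>k. 0" _ _ y])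
    show "eventually (\<lambda>k. 0 \<le> (x k)\<^sup>2) sequentially" by (auto intro!: always_eventually)
    show "eventually (\<lambda>k. (x k)\<^sup>2 \<le> y k) sequentially" using assms(1) by (auto intro!: always_eventually)
    show "(\<lambda>k. 0) \<longlonglongrightarrow> (0::real)" by simp
    show "y \<longlonglongrightarrow> 0" by (rule assms(2))
  qed
  then have "(\<lambda>k. sqrt ((x k)\<^sup>2)) \<longlonglongrightarrow> sqrt 0" by (rule tendsto_real_sqrt)
  then have "(\<lambda>k. \<bar>x k\<bar>) \<longlonglongrightarrow> 0" by simp
  then show ?thesis using tendsto_rabs_zero_iff by blast
qed

lemma Fcont:
  assumes "\<forall>m<M. \<forall>i<N. \<forall>j<N. (\<lambda>k. Ak k m i j) \<longlonglongrightarrow> Ls m i j"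
    and "\<forall>i<M. \<forall>j<M. (\<lambda>k. Tk k i j) \<longlonglongrightarrow> Lt i j"
  shows "(\<lambda>k. objective N M K X \<beta> (Ak k) (Tk k)) \<longlonglongrightarrow> objective N M K X \<beta> Ls Lt"
  unfolding obj_ip ip_def using assms by (auto intro!: tendsto_intros)

lemma limit_stationary:
  assumes run: "spateogl_run N M K X \<beta> S T" and b: "0 < \<beta>" and lp: "is_limit_point N M S T Ls Lt"
  shows "stationary N M K X \<beta> Ls Lt"
proof -
  define f where "f k = objective N M K X \<beta> (S k) (T k)" for k
  have fnn: "0 \<le> f k" for k unfolding f_def using run_feas[OF run, of k] b
    by (intro obj_nonneg) (auto simp: feasible_def)
  have fdec: "f (Suc k) \<le> f k" for k unfolding f_def by (rule monotone_obj[OF run b])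
  have dec: "decseq f" by (rule decseq_SucI) (rule fdec)
  have "Bseq f" by (rule BseqI'[of _ "f 0"]) (use fnn decseqD[OF dec] in auto)
  then have "convergent f" using Bseq_monoseq_convergent dec monoseq_iff by blast
  then have fl: "f \<longlonglongrightarrow> lim f" by (simp add: convergent_LIMSEQ_iff)
  have fd: "(\<lambda>k. f k - f (Suc k)) \<longlonglongrightarrow> 0" using tendsto_diff[OF fl LIMSEQ_Suc[OF fl]] by simp
  have gz: "g \<longlonglongrightarrow> 0" if g1: "\<And>k. f (Suc k) + \<beta>/2 * g k \<le> f k" and g2: "\<And>k. 0 \<le> g k" for g
  proof -
    have "(\<lambda>k. \<beta>/2 * g k) \<longlonglongrightarrow> 0"
    proof (rule tendsto_sandwich[of "\<lambda>k. 0" _ _ "\<lambda>k. f k - f (Suc k)"])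
      show "eventually (\<lambda>k. 0 \<le> \<beta>/2 * g k) sequentially" using g2 b by (auto intro!: always_eventually)
      show "eventually (\<lambda>k. \<beta>/2 * g k \<le> f k - f (Suc k)) sequentially"
      proof (intro always_eventually allI)
        fix k show "\<beta>/2 * g k \<le> f k - f (Suc k)" using g1[of k] by (simp add: le_diff_eq add.commute)
      qed
      show "(\<lambda>k. 0) \<longlonglongrightarrow> (0::real)" by simp
      show "(\<lambda>k. f k - f (Suc k)) \<longlonglongrightarrow> 0" by (rule fd)
    qed
    then have "(\<lambda>k. (2/\<beta>) * (\<beta>/2 * g k)) \<longlonglongrightarrow> (2/\<beta>) * 0" by (rule tendsto_mult[OF tendsto_const])
    then show ?thesis using b by simp
  qed
  have dS: "(\<lambda>k. S k m i j - S (Suc k) m i j) \<longlonglongrightarrow> 0" if m: "m < M" and ij: "i < N" "j < N" for m i j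
  proof (rule sq_to0[where y="\<lambda>k. frob_sq N (\<lambda>a b. S k m a b - S (Suc k) m a b)"])
    show "(\<lambda>k. frob_sq N (\<lambda>a b. S k m a b - S (Suc k) m a b)) \<longlonglongrightarrow> 0"
      by (rule gz[OF descentS[OF run b m, folded f_def] frob_nonneg])
    show "\<forall>k. (S k m i j - S (Suc k) m i j)\<^sup>2 \<le> frob_sq N (\<lambda>a b. S k m a b - S (Suc k) m a b)"
    proof
      fix k show "(S k m i j - S (Suc k) m i j)\<^sup>2 \<le> frob_sq N (\<lambda>a b. S k m a b - S (Suc k) m a b)"
        using frob_entry[OF ij, of "\<lambda>a b. S k m a b - S (Suc k) m a b"] by simp
    qed
  qed
  have dT: "(\<lambda>k. T k i j - T (Suc k) i j) \<longlonglongrightarrow> 0" if ij: "i < M" "j < M" for i j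
  proof (rule sq_to0[where y="\<lambda>k. frob_sq M (\<lambda>a b. T k a b - T (Suc k) a b)"])
    show "(\<lambda>k. frob_sq M (\<lambda>a b. T k a b - T (Suc k) a b)) \<longlonglongrightarrow> 0"
      by (rule gz[OF descentT[OF run b, folded f_def] frob_nonneg])
    show "\<forall>k. (T k i j - T (Suc k) i j)\<^sup>2 \<le> frob_sq M (\<lambda>a b. T k a b - T (Suc k) a b)"
    proof
      fix k show "(T k i j - T (Suc k) i j)\<^sup>2 \<le> frob_sq M (\<lambda>a b. T k a b - T (Suc k) a b)"
        using frob_entry[OF ij, of "\<lambda>a b. T k a b - T (Suc k) a b"] by simp
    qed
  qed
  obtain r where r: "strict_mono r"
    and rS: "\<forall>m<M. \<forall>i<N. \<forall>j<N. (\<lambda>k. S (r k) m i j) \<longlonglongrightarrow> Ls m i j"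
    and rT: "\<forall>i<M. \<forall>j<M. (\<lambda>k. T (r k) i j) \<longlonglongrightarrow> Lt i j"
    using lp unfolding is_limit_point_def by blast
  have suppS: "\<forall>m<M. supported N (Ls m)" and suppT: "supported M Lt"
    using lp unfolding is_limit_point_def by auto
  have rS1: "(\<lambda>k. S (Suc (r k)) m i j) \<longlonglongrightarrow> Ls m i j" if m: "m < M" and ij: "i < N" "j < N" for m i j
  proof -
    have "(\<lambda>k. S (r k) m i j - S (Suc (r k)) m i j) \<longlonglongrightarrow> 0"
      using LIMSEQ_subseq_LIMSEQ[OF dS[OF m ij] r] by (simp add: o_def)
    from tendsto_diff[OF rS[rule_format, OF m ij] this] show ?thesis by simp
  qed
  have rT1: "(\<lambda>k. T (Suc (r k)) i j) \<longlonglongrightarrow> Lt i j" if ij: "i < M" "j < M" for i j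
  proof -
    have "(\<lambda>k. T (r k) i j - T (Suc (r k)) i j) \<longlonglongrightarrow> 0"
      using LIMSEQ_subseq_LIMSEQ[OF dT[OF ij] r] by (simp add: o_def)
    from tendsto_diff[OF rT[rule_format, OF ij] this] show ?thesis by simp
  qed
  have LsF: "Ls m \<in> lap_set N" if m: "m < M" for m
    using lap_closed[unfolded closedS_def, rule_format, where n=N and Ak="\<lambda>k. S (r k) m" and B="Ls m"]
      run_feas[OF run] suppS rS m by blast
  have LtF: "Lt \<in> lap_set M"
    using lap_closed[unfolded closedS_def, rule_format, where n=M and Ak="\<lambda>k. T (r k)" and B=Lt]
      run_feas[OF run] suppT rT by blast
  have feas: "feasible N M Ls Lt" unfolding feasible_def using LsF LtF by auto
  have BOs: "objective N M K X \<beta> Ls Lt \<le> objective N M K X \<beta> (Ls(m:=L)) Lt"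
    if m: "m < M" and L: "L \<in> lap_set N" for m L
  proof (rule LIMSEQ_le)
    have ent: "(\<lambda>k. W S (r k) (Suc m) m' i j) \<longlonglongrightarrow> Ls m' i j" if "m' < M" "i < N" "j < N" for m' i j
      by (cases "m' < Suc m") (simp_all add: W_def rS1 rS that)
    show "(\<lambda>k. objective N M K X \<beta> (W S (r k) (Suc m)) (T (r k))) \<longlonglongrightarrow> objective N M K X \<beta> Ls Lt"
      by (rule Fcont) (simp_all add: ent rT)
    have ent2: "(\<lambda>k. ((W S (r k) (Suc m))(m:=L)) m' i j) \<longlonglongrightarrow> (Ls(m:=L)) m' i j" if "m' < M" "i < N" "j < N" for m' i j
      by (cases "m' = m") (simp_all add: ent that)
    show "(\<lambda>k. objective N M K X \<beta> ((W S (r k) (Suc m))(m:=L)) (T (r k))) \<longlonglongrightarrow> objective N M K X \<beta> (Ls(m:=L)) Lt"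
      by (rule Fcont) (use ent2 in blast, use rT in blast)
    show "\<exists>N0. \<forall>n\<ge>N0. objective N M K X \<beta> (W S (r n) (Suc m)) (T (r n)) \<le> objective N M K X \<beta> ((W S (r n) (Suc m))(m:=L)) (T (r n))"
      using step_spatial(2)[OF run m] L by blast
  qed
  have BOt: "objective N M K X \<beta> Ls Lt \<le> objective N M K X \<beta> Ls L" if L: "L \<in> lap_set M" for L
  proof (rule LIMSEQ_le)
    show "(\<lambda>k. objective N M K X \<beta> (S (Suc (r k))) (T (Suc (r k)))) \<longlonglongrightarrow> objective N M K X \<beta> Ls Lt"
      by (rule Fcont) (simp_all add: rS1 rT1)
    show "(\<lambda>k. objective N M K X \<beta> (S (Suc (r k))) L) \<longlonglongrightarrow> objective N M K X \<beta> Ls L"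
      by (rule Fcont) (simp_all add: rS1)
    show "\<exists>N0. \<forall>n\<ge>N0. objective N M K X \<beta> (S (Suc (r n))) (T (Suc (r n))) \<le> objective N M K X \<beta> (S (Suc (r n))) L"
      using step_temporal(2)[OF run] L by blast
  qed
  show ?thesis unfolding stationary_def
  proof (intro conjI allI impI feas)
    fix Ls' Lt' assume f': "feasible N M Ls' Lt'"
    define DD where "DD = (\<lambda>m a b. Ls' m a b - Ls m a b)"
    define EE where "EE = (\<lambda>a b. Lt' a b - Lt a b)"
    have der: "((\<lambda>t. objective N M K X \<beta> (\<lambda>m i j. Ls m i j + t * (Ls' m i j - Ls m i j))
                   (\<lambda>i j. Lt i j + t * (Lt' i j - Lt i j))) has_real_derivative dF N M K X \<beta> Ls Lt DD EE) (at 0)"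
      using derivF[where Ls=Ls and D=DD and Lt=Lt and E=EE and N=N and M=M and K=K and X=X and \<beta>=\<beta>]
      unfolding DD_def EE_def by simp
    have blk: "0 \<le> dF N M K X \<beta> Ls Lt (Dm DD m) (\<lambda>a b. 0)" if m: "m < M" for m
    proof (rule deriv_min[OF derivF[where Ls=Ls and D="Dm DD m" and Lt=Lt and E="\<lambda>a b. 0"]], intro allI impI)
      fix t :: real assume t: "0 < t" "t \<le> 1"
      have e0: "(\<lambda>ma a b. Ls ma a b + 0 * Dm DD m ma a b) = Ls" by simp
      have et: "(\<lambda>ma a b. Ls ma a b + t * Dm DD m ma a b) = Ls(m := seg (Ls m) (Ls' m) t)"
        by (auto simp: Dm_def DD_def seg_def fun_eq_iff)
      have sg: "seg (Ls m) (Ls' m) t \<in> lap_set N"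
        using lap_convex[unfolded convS_def] LsF[OF m] f' m t unfolding feasible_def by auto
      show "objective N M K X \<beta> (\<lambda>ma a b. Ls ma a b + 0 * Dm DD m ma a b) (\<lambda>a b. Lt a b + 0 * 0)
          \<le> objective N M K X \<beta> (\<lambda>ma a b. Ls ma a b + t * Dm DD m ma a b) (\<lambda>a b. Lt a b + t * 0)"
        unfolding e0 et using BOs[OF m sg] by simp
    qed
    have tmp: "0 \<le> dF N M K X \<beta> Ls Lt (\<lambda>m a b. 0) EE"
    proof (rule deriv_min[OF derivF[where Ls=Ls and D="\<lambda>m a b. 0" and Lt=Lt and E=EE]], intro allI impI)
      fix t :: real assume t: "0 < t" "t \<le> 1"
      have et: "(\<lambda>a b. Lt a b + t * EE a b) = seg Lt Lt' t"
        by (auto simp: EE_def seg_def fun_eq_iff)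
      have e0: "(\<lambda>a b. Lt a b + 0 * EE a b) = Lt" by simp
      have sg: "seg Lt Lt' t \<in> lap_set M"
        using lap_convex[unfolded convS_def] LtF f' t unfolding feasible_def by auto
      show "objective N M K X \<beta> (\<lambda>m a b. Ls m a b + 0 * 0) (\<lambda>a b. Lt a b + 0 * EE a b)
          \<le> objective N M K X \<beta> (\<lambda>m a b. Ls m a b + t * 0) (\<lambda>a b. Lt a b + t * EE a b)"
        unfolding e0 et using BOt[OF sg] by simp
    qed
    have "0 \<le> dF N M K X \<beta> Ls Lt DD EE"
      unfolding dF_decomp[of N M K X \<beta> Ls Lt DD EE]
      using blk tmp by (intro add_nonneg_nonneg sum_nonneg) auto
    then show "\<exists>D. ((\<lambda>t. objective N M K X \<beta> (\<lambda>m i j. Ls m i j + t * (Ls' m i j - Ls m i j))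
                   (\<lambda>i j. Lt i j + t * (Lt' i j - Lt i j))) has_real_derivative D) (at 0) \<and> 0 \<le> D"
      using der by blast
  qed
qed

theorem theorem1:
  fixes N M :: nat and K :: "nat \<Rightarrow> nat" and X :: "nat \<Rightarrow> mat" and \<beta> :: real
  assumes "1 \<le> N" and "1 \<le> M" and "0 < \<beta>"
    and "lap_set N \<noteq> {}" and "lap_set M \<noteq> {}"
  shows
    "(\<forall>Ls Lt. Lt \<in> lap_set M \<longrightarrow>
        temporal_smooth N M Ls Lt =
          (\<Sum>i<M. \<Sum>j\<in>{i<..<M}. tweight Lt i j * frob_sq N (\<lambda>a b. Ls i a b - Ls j a b)))
     \<and> (\<forall>Ls Lt m. feasible N M Ls Lt \<and> m < M \<longrightarrow>
          (\<exists>!L. is_argmin (lap_set N) (spatial_subobj N M K X \<beta> Ls Lt m) L))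
     \<and> (\<forall>Ls. (\<forall>m<M. Ls m \<in> lap_set N) \<longrightarrow>
          (\<exists>!L. is_argmin (lap_set M) (temporal_subobj N M \<beta> Ls) L))
     \<and> (\<forall>S T. spateogl_run N M K X \<beta> S T \<longrightarrow>
          (\<forall>k. objective N M K X \<beta> (S (Suc k)) (T (Suc k)) \<le> objective N M K X \<beta> (S k) (T k))
          \<and> (\<forall>Ls Lt. is_limit_point N M S T Ls Lt \<longrightarrow> stationary N M K X \<beta> Ls Lt))"
proof (intro conjI allI impI)
  fix Ls Lt assume "Lt \<in> lap_set M"
  then show "temporal_smooth N M Ls Lt =
          (\<Sum>i<M. \<Sum>j\<in>{i<..<M}. tweight Lt i j * frob_sq N (\<lambda>a b. Ls i a b - Ls j a b))"
    by (rule part1)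
next
  fix Ls Lt m assume h: "feasible N M Ls Lt \<and> m < M"
  then have Lt: "Lt \<in> lap_set M" and m: "m < M" unfolding feasible_def by auto
  note qc = qconv_subobj[OF Lt m, where N=N and S="lap_set N" and K=K and X=X and \<beta>=\<beta> and Ls=Ls]
  show "\<exists>!L. is_argmin (lap_set N) (spatial_subobj N M K X \<beta> Ls Lt m) L"
  proof (rule ex_ex1I)
    show "\<exists>L. is_argmin (lap_set N) (spatial_subobj N M K X \<beta> Ls Lt m) L"
      by (rule qconv_exists[OF assms(3) qc lap_convex assms(4) lap_closed _ seqcont_subobj])
         (use subobj_nonneg[OF Lt _ assms(3) m] in blast)
    show "\<And>A B. is_argmin (lap_set N) (spatial_subobj N M K X \<beta> Ls Lt m) A \<Longrightarrow>
             is_argmin (lap_set N) (spatial_subobj N M K X \<beta> Ls Lt m) B \<Longrightarrow> A = B"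
      by (rule qconv_unique[OF assms(3) qc lap_convex]) (auto intro: lap_supp)
  qed
next
  fix Ls :: "nat \<Rightarrow> mat" assume "\<forall>m<M. Ls m \<in> lap_set N"
  note qc = qconv_tsub[where M=M and S="lap_set M" and \<beta>=\<beta> and N=N and Ls=Ls]
  show "\<exists>!L. is_argmin (lap_set M) (temporal_subobj N M \<beta> Ls) L"
  proof (rule ex_ex1I)
    show "\<exists>L. is_argmin (lap_set M) (temporal_subobj N M \<beta> Ls) L"
      by (rule qconv_exists[OF assms(3) qc lap_convex assms(5) lap_closed _ seqcont_tsub])
         (use tsub_nonneg[OF _ assms(3)] in blast)
    show "\<And>A B. is_argmin (lap_set M) (temporal_subobj N M \<beta> Ls) A \<Longrightarrow>
             is_argmin (lap_set M) (temporal_subobj N M \<beta> Ls) B \<Longrightarrow> A = B"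
      by (rule qconv_unique[OF assms(3) qc lap_convex]) (auto intro: lap_supp)
  qed
next
  fix S T k assume run: "spateogl_run N M K X \<beta> S T"
  show "objective N M K X \<beta> (S (Suc k)) (T (Suc k)) \<le> objective N M K X \<beta> (S k) (T k)"
    by (rule monotone_obj[OF run assms(3)])
next
  fix S T Ls Lt assume run: "spateogl_run N M K X \<beta> S T" and lp: "is_limit_point N M S T Ls Lt"
  show "stationary N M K X \<beta> Ls Lt" by (rule limit_stationary[OF run assms(3) lp])
qed

end
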